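(* Let $d>1$ be an integer and $\mu>0$. Let $A,B$ be sequences of non-negative integers bounded by $\mu$ with $\mathrm{DS}(A,d)<\mathrm{DS}(B,d)$. Then there exist integer sequences $C$ and $X$ such that $A[0]+C[0]+X[0]=B[0]$ and $A[i]+C[i]+X[i]=B[i]+d\cdot X[i-1]$ for all $i\ge1$, and moreover $0\le C[0]\le \mu\cdot\frac{d}{d-1}$, $0\le C[i]<d$ for all $i\ge1$, and $|X[i]|\le 1+\frac{\mu}{d-1}$ for all $i\ge0$.
   Context: $\mathrm{DS}(A,d)=\sum_{i\ge0}A[i]/d^i$. *)

theory Defs
  imports Complex_Main
begin

definition DS :: "(nat \<Rightarrow> int) \<Rightarrow> int \<Rightarrow> real" where
  "DS A d = (\<Sum>i. real_of_int (A i) / real_of_int d ^ i)"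

end

theory Submission imports Defs begin

lemma geom_bound:
  fixes r \<mu> :: real and f :: "nat \<Rightarrow> real"
  assumes r: "r > 1" and fb: "\<And>n. \<bar>f n\<bar> \<le> \<mu>"
  shows "summable (\<lambda>n. f n / r^n) \<and> \<bar>\<Sum>n. f n / r^n\<bar> \<le> \<mu> * r / (r - 1)"
proof -
  have ig: "norm (1/r) < 1" using r by simp
  have sg: "summable (\<lambda>n. \<mu> * (1/r)^n)" using ig by (intro summable_mult) simp
  have le: "norm (f n / r^n) \<le> \<mu> * (1/r)^n" for n
    using fb[of n] r by (simp add: power_divide divide_right_mono)
  have sn: "summable (\<lambda>n. norm (f n / r^n))"
    by (rule summable_comparison_test[OF _ sg]) (use le in simp)
  have s: "summable (\<lambda>n. f n / r^n)" using summable_norm_cancel[OF sn] .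
  have "\<bar>\<Sum>n. f n / r^n\<bar> \<le> (\<Sum>n. norm (f n / r^n))" using summable_norm[OF sn] by simp
  also have "\<dots> \<le> (\<Sum>n. \<mu> * (1/r)^n)" by (rule suminf_le[OF le sn sg])
  also have "\<dots> = \<mu> * (1 / (1 - 1/r))" using suminf_mult[of "\<lambda>n. (1/r)^n" \<mu>] suminf_geometric[OF ig] ig by simp
  also have "\<dots> = \<mu> * r / (r - 1)" using r by (simp add: field_simps)
  finally show ?thesis using s by simp
qed

fun Pf :: "int \<Rightarrow> (nat \<Rightarrow> int) \<Rightarrow> nat \<Rightarrow> int" where
  "Pf d D 0 = D 0"
| "Pf d D (Suc i) = d * Pf d D i + D (Suc i)"

lemma Pf_real: "real_of_int (Pf d D i) = real_of_int d ^ i * (\<Sum>j<Suc i. real_of_int (D j) / real_of_int d ^ j)"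
  if "d > 0"
proof (induction i)
  case 0 then show ?case by simp
next
  case (Suc i)
  have "real_of_int d ^ Suc i * (\<Sum>j<Suc (Suc i). real_of_int (D j) / real_of_int d ^ j)
     = real_of_int d * (real_of_int d ^ i * (\<Sum>j<Suc i. real_of_int (D j) / real_of_int d ^ j)) + real_of_int (D (Suc i))"
    using that by (simp add: field_simps)
  then show ?case using Suc by simp
qed

lemma floor_digit:
  fixes y :: real and d :: int assumes "d > 0"
  shows "0 \<le> \<lfloor>real_of_int d * y\<rfloor> - d * \<lfloor>y\<rfloor> \<and> \<lfloor>real_of_int d * y\<rfloor> - d * \<lfloor>y\<rfloor> < d"
proof -
  have a: "real_of_int (d * \<lfloor>y\<rfloor>) \<le> real_of_int d * y"
    using assms by (simp add: mult_left_mono)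
  have b: "real_of_int d * y < real_of_int (d * \<lfloor>y\<rfloor> + d)"
  proof -
    have "y < real_of_int \<lfloor>y\<rfloor> + 1" by linarith
    then have "real_of_int d * y < real_of_int d * (real_of_int \<lfloor>y\<rfloor> + 1)"
      using assms by (intro mult_strict_left_mono) auto
    then show ?thesis by (simp add: distrib_left)
  qed
  from a have "d * \<lfloor>y\<rfloor> \<le> \<lfloor>real_of_int d * y\<rfloor>" by (simp add: le_floor_iff)
  moreover from b have "\<lfloor>real_of_int d * y\<rfloor> < d * \<lfloor>y\<rfloor> + d" by (simp add: floor_less_iff)
  ultimately show ?thesis by simp
qed

theorem corollary10:
  fixes d :: int and \<mu> :: real and A B :: "nat \<Rightarrow> int"
  assumes "d > 1" and "\<mu> > 0"
    and "\<And>i. 0 \<le> A i" and "\<And>i. real_of_int (A i) \<le> \<mu>"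
    and "\<And>i. 0 \<le> B i" and "\<And>i. real_of_int (B i) \<le> \<mu>"
    and "DS A d < DS B d"
  shows "\<exists>C X :: nat \<Rightarrow> int.
           A 0 + C 0 + X 0 = B 0
         \<and> (\<forall>i\<ge>1. A i + C i + X i = B i + d * X (i - 1))
         \<and> 0 \<le> C 0 \<and> real_of_int (C 0) \<le> \<mu> * (real_of_int d / (real_of_int d - 1))
         \<and> (\<forall>i\<ge>1. 0 \<le> C i \<and> C i < d)
         \<and> (\<forall>i. \<bar>real_of_int (X i)\<bar> \<le> 1 + \<mu> / (real_of_int d - 1))"
proof -
  define r where "r = real_of_int d"
  have r1: "r > 1" using assms(1) unfolding r_def by simp
  define D where "D = (\<lambda>i. B i - A i)"
  have Db: "\<bar>real_of_int (D i)\<bar> \<le> \<mu>" for i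
    using assms(3-6)[of i] unfolding D_def by (simp add: abs_le_iff)
  have gA: "summable (\<lambda>n. real_of_int (A n) / r^n) \<and> \<bar>\<Sum>n. real_of_int (A n) / r^n\<bar> \<le> \<mu> * r / (r - 1)"
    using assms(3,4) by (intro geom_bound[OF r1]) simp
  have gB: "summable (\<lambda>n. real_of_int (B n) / r^n) \<and> \<bar>\<Sum>n. real_of_int (B n) / r^n\<bar> \<le> \<mu> * r / (r - 1)"
    using assms(5,6) by (intro geom_bound[OF r1]) simp
  have gD: "summable (\<lambda>n. real_of_int (D n) / r^n)"
    using geom_bound[OF r1 Db] by simp
  define S where "S = (\<Sum>n. real_of_int (D n) / r^n)"
  have SBA: "S = DS B d - DS A d"
    unfolding S_def DS_def r_def[symmetric] D_def
    using suminf_diff[of "\<lambda>n. real_of_int (B n) / r^n" "\<lambda>n. real_of_int (A n) / r^n"] gA gB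
    by (simp add: diff_divide_distrib)
  have Spos: "S > 0" using SBA assms(7) by simp
  have DSA: "DS A d \<ge> 0" unfolding DS_def r_def[symmetric]
    using gA assms(3) r1 by (intro suminf_nonneg) auto
  have Sle: "S \<le> \<mu> * (r / (r - 1))"
    using SBA DSA gB unfolding DS_def r_def[symmetric] by auto
  define F where "F = (\<lambda>i. \<lfloor>r^i * S\<rfloor>)"
  define C where "C = (\<lambda>i. if i = 0 then F 0 else F i - d * F (i - 1))"
  define X where "X = (\<lambda>i. Pf d D i - F i)"
  have tail: "\<bar>real_of_int (Pf d D i) - r^i * S\<bar> \<le> \<mu> / (r - 1)" for i
  proof -
    have sp: "S = (\<Sum>n. real_of_int (D (n + Suc i)) / r^(n + Suc i)) + (\<Sum>j<Suc i. real_of_int (D j) / r^j)"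
      unfolding S_def using suminf_split_initial_segment[OF gD, of "Suc i"] by simp
    have g2: "summable (\<lambda>n. real_of_int (D (n + Suc i)) / r^n) \<and> \<bar>\<Sum>n. real_of_int (D (n + Suc i)) / r^n\<bar> \<le> \<mu> * r / (r - 1)"
      using Db by (intro geom_bound[OF r1]) simp
    have "(\<Sum>n. real_of_int (D (n + Suc i)) / r^(n + Suc i)) = (\<Sum>n. real_of_int (D (n + Suc i)) / r^n / r^(Suc i))"
      by (simp add: power_add mult_ac)
    also have "\<dots> = (\<Sum>n. real_of_int (D (n + Suc i)) / r^n) / r^(Suc i)"
      using suminf_divide g2 by blast
    finally have tq: "(\<Sum>n. real_of_int (D (n + Suc i)) / r^(n + Suc i)) = (\<Sum>n. real_of_int (D (n + Suc i)) / r^n) / r^(Suc i)" .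
    have P: "real_of_int (Pf d D i) = r^i * (\<Sum>j<Suc i. real_of_int (D j) / r^j)"
      unfolding r_def using Pf_real assms(1) by simp
    have "real_of_int (Pf d D i) - r^i * S = - (r^i * ((\<Sum>n. real_of_int (D (n + Suc i)) / r^n) / r^(Suc i)))"
      using P sp tq by (simp add: algebra_simps)
    also have "\<dots> = - ((\<Sum>n. real_of_int (D (n + Suc i)) / r^n) / r)"
      using r1 by (simp add: field_simps)
    finally have "\<bar>real_of_int (Pf d D i) - r^i * S\<bar> = \<bar>\<Sum>n. real_of_int (D (n + Suc i)) / r^n\<bar> / r"
      using r1 by simp
    also have "\<dots> \<le> \<mu> * r / (r - 1) / r" using g2 r1 by (intro divide_right_mono) auto
    also have "\<dots> = \<mu> / (r - 1)" using r1 by (simp add: field_simps)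
    finally show ?thesis .
  qed
  have e0: "A 0 + C 0 + X 0 = B 0" unfolding C_def X_def D_def by simp
  have e1: "\<forall>i\<ge>1. A i + C i + X i = B i + d * X (i - 1)"
  proof (intro allI impI)
    fix i :: nat assume "i \<ge> 1"
    then obtain k where k: "i = Suc k" by (cases i) auto
    show "A i + C i + X i = B i + d * X (i - 1)"
      unfolding C_def X_def D_def k by (simp add: algebra_simps)
  qed
  have c0: "0 \<le> C 0" unfolding C_def F_def using Spos by simp
  have c0b: "real_of_int (C 0) \<le> \<mu> * (real_of_int d / (real_of_int d - 1))"
    unfolding C_def F_def r_def[symmetric] using Sle by simp linarith
  have ci: "\<forall>i\<ge>1. 0 \<le> C i \<and> C i < d"
  proof (intro allI impI)
    fix i :: nat assume "i \<ge> 1"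
    then obtain k where k: "i = Suc k" by (cases i) auto
    have "r^i * S = real_of_int d * (r^k * S)" unfolding k r_def by simp
    then have "F i = \<lfloor>real_of_int d * (r^k * S)\<rfloor>" unfolding F_def by metis
    then show "0 \<le> C i \<and> C i < d" unfolding C_def using k floor_digit[of d "r^k * S"] assms(1)
      by (simp add: F_def)
  qed
  have xb: "\<forall>i. \<bar>real_of_int (X i)\<bar> \<le> 1 + \<mu> / (real_of_int d - 1)"
  proof
    fix i
    have "real_of_int (F i) \<le> r^i * S" "r^i * S < real_of_int (F i) + 1" unfolding F_def by linarith+
    then show "\<bar>real_of_int (X i)\<bar> \<le> 1 + \<mu> / (real_of_int d - 1)"
      using tail[of i] unfolding X_def r_def[symmetric] by (simp add: abs_le_iff)
  qed
  show ?thesis using e0 e1 c0 c0b ci xb by blast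
qed

end
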